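(* Let $b\ge 2$ be an integer, let $A_b=\{1+(b-1)r : r\in\mathbb{N}\}$, and let $\mathrm{fact}_b:A_b\to A_b$ be defined by $\mathrm{fact}_b(1+(b-1)r)=\prod_{k=1}^{r}(1+(b-1)k)$ for all $r\in\mathbb{N}$ (the empty product being $1$). Then for every $n\in A_b$, \[1\le \frac{\mathrm{fact}_b(n)}{e^{\frac{1}{b-1}}\left(\frac{n}{e}\right)^{\frac{n}{b-1}}}\le n.\] *)

theory Defs
  imports Complex_Main
begin

definition A :: "nat \<Rightarrow> nat set" where
  "A b = {1 + (b - 1) * r | r. True}"

definition fact_b :: "nat \<Rightarrow> nat \<Rightarrow> nat" where
  "fact_b b n = (\<Prod>k = 1..(n - 1) div (b - 1). 1 + (b - 1) * k)"

end

theory Submission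
  imports Defs
begin

lemma hstep:
  fixes x y :: real
  assumes "0 < x" "x \<le> y"
  shows "(y - x) * ln x \<le> (y * ln y - y) - (x * ln x - x)"
    and "(y * ln y - y) - (x * ln x - x) \<le> (y - x) * ln y"
proof -
  have y0: "0 < y" using assms by linarith
  have l1: "ln (y / x) \<le> y / x - 1" using ln_le_minus_one[of "y/x"] assms y0 by simp
  have l2: "ln (x / y) \<le> x / y - 1" using ln_le_minus_one[of "x/y"] assms y0 by simp
  have q1: "ln (y/x) = ln y - ln x" using assms y0 by (simp add: ln_div)
  have q2: "ln (x/y) = ln x - ln y" using assms y0 by (simp add: ln_div)
  have a: "x * (ln y - ln x) \<le> y - x"
  proof -
    have "x * (ln y - ln x) \<le> x * (y/x - 1)" using l1 q1 assms by (intro mult_left_mono) auto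
    also have "\<dots> = y - x" using assms by (simp add: field_simps)
    finally show ?thesis .
  qed
  have b: "y * (ln x - ln y) \<le> x - y"
  proof -
    have "y * (ln x - ln y) \<le> y * (x/y - 1)" using l2 q2 y0 by (intro mult_left_mono) auto
    also have "\<dots> = x - y" using y0 by (simp add: field_simps)
    finally show ?thesis .
  qed
  show "(y - x) * ln x \<le> (y * ln y - y) - (x * ln x - x)" using b by (simp add: algebra_simps)
  show "(y * ln y - y) - (x * ln x - x) \<le> (y - x) * ln y" using a by (simp add: algebra_simps)
qed

definition G :: "real \<Rightarrow> nat \<Rightarrow> real" where
  "G d r = 1/d + ((1 + d * r)/d) * (ln (1 + d * r) - 1)"

lemma Gdiff:
  fixes d :: real and r :: nat
  assumes "d > 0"
  shows "ln (1 + d * r) \<le> G d (Suc r) - G d r" "G d (Suc r) - G d r \<le> ln (1 + d * Suc r)"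
proof -
  define x :: real where "x = 1 + d * r"
  define y :: real where "y = 1 + d * Suc r"
  have x0: "0 < x" using assms by (simp add: x_def add_pos_nonneg)
  have yx: "y = x + d" by (simp add: x_def y_def algebra_simps)
  have e: "G d (Suc r) - G d r = ((y * ln y - y) - (x * ln x - x)) / d"
    unfolding G_def x_def[symmetric] y_def[symmetric] using assms by (simp add: field_simps)
  have xy: "x \<le> y" using yx assms by simp
  note h1 = hstep(1)[OF x0 xy] and h2 = hstep(2)[OF x0 xy]
  show "ln (1 + d * r) \<le> G d (Suc r) - G d r"
    unfolding e x_def[symmetric] using h1 yx assms by (simp add: field_simps)
  show "G d (Suc r) - G d r \<le> ln (1 + d * Suc r)"
    unfolding e y_def[symmetric] using h2 yx assms by (simp add: field_simps)
qed

lemma low: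
  fixes d :: real and r :: nat
  assumes "d > 0"
  shows "G d r \<le> (\<Sum>k=1..r. ln (1 + d * real k))"
proof (induction r)
  case 0 then show ?case by (simp add: G_def)
next
  case (Suc r)
  have "G d (Suc r) \<le> G d r + ln (1 + d * Suc r)" using Gdiff(2)[OF assms, of r] by simp
  then show ?case using Suc by simp
qed

lemma up:
  fixes d :: real and r :: nat
  assumes "d > 0"
  shows "(\<Sum>k=1..r. ln (1 + d * real k)) \<le> G d r + ln (1 + d * r)"
proof (induction r)
  case 0 then show ?case by (simp add: G_def)
next
  case (Suc r)
  have "G d r + ln (1 + d * r) \<le> G d (Suc r)" using Gdiff(1)[OF assms, of r] by simp
  then show ?case using Suc by simp
qed

theorem mainTheorem1:
  fixes b n :: nat
  assumes "b \<ge> 2" and "n \<in> A b"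
  shows "1 \<le> real (fact_b b n) / (exp (1 / (real b - 1)) * (real n / exp 1) powr (real n / (real b - 1)))
       \<and> real (fact_b b n) / (exp (1 / (real b - 1)) * (real n / exp 1) powr (real n / (real b - 1))) \<le> real n"
proof -
  obtain r where n: "n = 1 + (b - 1) * r" using assms(2) by (auto simp: A_def)
  define d where "d = real b - 1"
  have d0: "d > 0" using assms(1) by (simp add: d_def)
  have dd: "real (b - 1) = d" using assms(1) by (simp add: d_def of_nat_diff)
  have rn: "real n = 1 + d * r" using n dd by simp
  have div: "(n - 1) div (b - 1) = r" using n assms(1) by simp
  have F: "real (fact_b b n) = (\<Prod>k=1..r. 1 + d * real k)"
    unfolding fact_b_def div by (simp add: dd[symmetric])
  have F2: "(\<Prod>k=1..r. 1 + d * real k) = exp (\<Sum>k=1..r. ln (1 + d * real k))"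
    unfolding exp_sum[OF finite_atLeastAtMost]
  proof (rule prod.cong[OF refl])
    fix k assume "k \<in> {1..r}"
    have "0 < 1 + d * real k" using d0 by (simp add: add_pos_nonneg)
    then show "1 + d * real k = exp (ln (1 + d * real k))" by simp
  qed
  have n0: "real n > 0" using rn d0 by (simp add: add_pos_nonneg)
  have D: "exp (1 / (real b - 1)) * (real n / exp 1) powr (real n / (real b - 1)) = exp (G d r)"
  proof -
    have "(real n / exp 1) powr (real n / d) = exp ((real n / d) * (ln (real n) - 1))"
      using n0 by (simp add: powr_def ln_div)
    then show ?thesis unfolding G_def d_def[symmetric] rn[symmetric]
      by (simp add: exp_add[symmetric])
  qed
  define S where "S = (\<Sum>k=1..r. ln (1 + d * real k))"
  have ratio: "real (fact_b b n) / (exp (1 / (real b - 1)) * (real n / exp 1) powr (real n / (real b - 1)))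
       = exp (S - G d r)" unfolding D F F2 S_def by (simp add: exp_diff)
  have L: "G d r \<le> S" using low[OF d0] S_def by simp
  have U: "S - G d r \<le> ln (real n)" using up[OF d0, of r] S_def rn by simp
  show ?thesis unfolding ratio
  proof
    show "1 \<le> exp (S - G d r)" using L by simp
    have "exp (S - G d r) \<le> exp (ln (real n))" using U by simp
    then show "exp (S - G d r) \<le> real n" using n0 by simp
  qed
qed

end
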